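(* Let $\alpha,\beta,\gamma_1,\gamma_2\in\widehat{\mathbb{F}_q^\times}$ with $\varepsilon\notin\{\alpha,\overline{\beta}\gamma_1\gamma_2\}$. Then for every $x\in\mathbb{F}_q$ and $y\in\mathbb{F}_q^\times$, $$F_4\!\left({\alpha;\beta\atop\gamma_1,\gamma_2};x,y\right)=\frac{g(\overline{\alpha}\beta)g(\alpha\overline{\gamma_2})}{g(\beta)g(\overline{\gamma_2})}\,\overline{\alpha}(y)\,F_4\!\left({\alpha;\alpha\overline{\gamma_2}\atop\gamma_1,\alpha\overline{\beta}};\frac{x}{y},\frac{1}{y}\right).$$
   Context: $\mathbb{F}_q$ is a finite field with $q$ elements. $\widehat{\mathbb{F}_q^\times}$ is the group of multiplicative characters $\mathbb{F}_q^\times\to\overline{\mathbb{Q}}^\times$, $\varepsilon$ the trivial character; every character (including $\varepsilon$) is extended by $0$ at $0$; $\overline{\eta}=\eta^{-1}$; $\delta(\eta)=1$ if $\eta=\varepsilon$, else $0$. $\psi$ is a fixed non-trivial additive character. $g(\eta)=-\sum_{x\in\mathbb{F}_q^\times}\psi(x)\eta(x)$, $g^\circ(\eta)=q^{\delta(\eta)}g(\eta)$, $(\alpha)_\nu=g(\alpha\nu)/g(\alpha)$, $(\alpha)^\circ_\nu=g^\circ(\alpha\nu)/g^\circ(\alpha)$. For $x,y\in\mathbb{F}_q$, $F_4\!\left({\alpha;\beta\atop\gamma_1,\gamma_2};x,y\right)=\frac{1}{(1-q)^2}\sum_{\nu_1,\nu_2\in\widehat{\mathbb{F}_q^\times}}\frac{(\alpha)_{\nu_1\nu_2}(\beta)_{\nu_1\nu_2}}{(\gamma_1)^\circ_{\nu_1}(\gamma_2)^\circ_{\nu_2}(\varepsilon)^\circ_{\nu_1}(\varepsilon)^\circ_{\nu_2}}\nu_1(x)\nu_2(y)$.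 *)

theory Defs
  imports Complex_Main
begin

text \<open>Finite field: a type of class finite and field. Characters take values in complex
  (an algebraically closed field containing an algebraic closure of Q).\<close>

definition mult_chars :: "('a::{finite,field} \<Rightarrow> complex) set" where
  "mult_chars = {\<chi>. \<chi> 0 = 0 \<and> \<chi> 1 = 1 \<and>
      (\<forall>x y. x \<noteq> 0 \<longrightarrow> y \<noteq> 0 \<longrightarrow> \<chi> (x * y) = \<chi> x * \<chi> y)}"

definition triv_char :: "'a::{finite,field} \<Rightarrow> complex" where
  "triv_char = (\<lambda>x. if x = 0 then 0 else 1)"

definition char_mult :: "('a::{finite,field} \<Rightarrow> complex) \<Rightarrow> ('a \<Rightarrow> complex) \<Rightarrow> ('a \<Rightarrow> complex)" where
  "char_mult \<chi> \<eta> = (\<lambda>x. \<chi> x * \<eta> x)"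

definition char_inv :: "('a::{finite,field} \<Rightarrow> complex) \<Rightarrow> ('a \<Rightarrow> complex)" where
  "char_inv \<chi> = (\<lambda>x. inverse (\<chi> x))"

definition add_char :: "('a::{finite,field} \<Rightarrow> complex) \<Rightarrow> bool" where
  "add_char \<psi> \<longleftrightarrow> (\<forall>x y. \<psi> (x + y) = \<psi> x * \<psi> y) \<and> (\<exists>x. \<psi> x \<noteq> 1)"

definition gauss :: "('a::{finite,field} \<Rightarrow> complex) \<Rightarrow> ('a \<Rightarrow> complex) \<Rightarrow> complex" where
  "gauss \<psi> \<eta> = - (\<Sum>x\<in>{x. x \<noteq> 0}. \<psi> x * \<eta> x)"

definition gauss_circ :: "('a::{finite,field} \<Rightarrow> complex) \<Rightarrow> ('a \<Rightarrow> complex) \<Rightarrow> complex" where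
  "gauss_circ \<psi> \<eta> = (if \<eta> = triv_char then of_nat (card (UNIV::'a set)) else 1) * gauss \<psi> \<eta>"

definition poch :: "('a::{finite,field} \<Rightarrow> complex) \<Rightarrow> ('a \<Rightarrow> complex) \<Rightarrow> ('a \<Rightarrow> complex) \<Rightarrow> complex" where
  "poch \<psi> \<alpha> \<nu> = gauss \<psi> (char_mult \<alpha> \<nu>) / gauss \<psi> \<alpha>"

definition poch_circ :: "('a::{finite,field} \<Rightarrow> complex) \<Rightarrow> ('a \<Rightarrow> complex) \<Rightarrow> ('a \<Rightarrow> complex) \<Rightarrow> complex" where
  "poch_circ \<psi> \<alpha> \<nu> = gauss_circ \<psi> (char_mult \<alpha> \<nu>) / gauss_circ \<psi> \<alpha>"

definition F4 :: "('a::{finite,field} \<Rightarrow> complex) \<Rightarrow> ('a \<Rightarrow> complex) \<Rightarrow> ('a \<Rightarrow> complex)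
    \<Rightarrow> ('a \<Rightarrow> complex) \<Rightarrow> ('a \<Rightarrow> complex) \<Rightarrow> 'a \<Rightarrow> 'a \<Rightarrow> complex" where
  "F4 \<psi> \<alpha> \<beta> \<gamma>1 \<gamma>2 x y =
     1 / (1 - of_nat (card (UNIV::'a set)))^2 *
     (\<Sum>\<nu>1\<in>mult_chars. \<Sum>\<nu>2\<in>mult_chars.
        poch \<psi> \<alpha> (char_mult \<nu>1 \<nu>2) * poch \<psi> \<beta> (char_mult \<nu>1 \<nu>2) /
        (poch_circ \<psi> \<gamma>1 \<nu>1 * poch_circ \<psi> \<gamma>2 \<nu>2 *
         poch_circ \<psi> triv_char \<nu>1 * poch_circ \<psi> triv_char \<nu>2) * \<nu>1 x * \<nu>2 y)"

end

theory Submission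
  imports Defs
begin

lemma mc_D: "\<chi> \<in> mult_chars \<Longrightarrow> \<chi> 0 = 0 \<and> \<chi> 1 = 1 \<and>
      (\<forall>x y. x \<noteq> 0 \<longrightarrow> y \<noteq> 0 \<longrightarrow> \<chi> (x * y) = \<chi> x * \<chi> y)"
  unfolding mult_chars_def by blast

lemma mc_mult: "\<chi> \<in> mult_chars \<Longrightarrow> x \<noteq> 0 \<Longrightarrow> y \<noteq> 0 \<Longrightarrow> \<chi> (x * y) = \<chi> x * \<chi> y"
  unfolding mult_chars_def by blast

lemma mc_0[simp]: "\<chi> \<in> mult_chars \<Longrightarrow> \<chi> 0 = 0"
  unfolding mult_chars_def by blast

lemma mc_1[simp]: "\<chi> \<in> mult_chars \<Longrightarrow> \<chi> 1 = 1"
  unfolding mult_chars_def by blast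

lemma mc_inverse: "\<chi> \<in> mult_chars \<Longrightarrow> (x::'a::{finite,field}) \<noteq> 0 \<Longrightarrow> \<chi> (inverse x) = inverse (\<chi> x)"
proof -
  assume a: "\<chi> \<in> mult_chars" "x \<noteq> 0"
  have "\<chi> (x * inverse x) = \<chi> x * \<chi> (inverse x)" using a by (intro mc_mult) auto
  moreover have "x * inverse x = 1" using a(2) by (rule right_inverse)
  ultimately have "\<chi> x * \<chi> (inverse x) = 1" using a by simp
  then show ?thesis by (rule inverse_unique[symmetric])
qed

lemma mc_nz: "\<chi> \<in> mult_chars \<Longrightarrow> (x::'a::{finite,field}) \<noteq> 0 \<Longrightarrow> \<chi> x \<noteq> 0"
proof
  assume a: "\<chi> \<in> mult_chars" "x \<noteq> 0" "\<chi> x = 0"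
  have "\<chi> (x * inverse x) = \<chi> x * \<chi> (inverse x)" using a by (intro mc_mult) auto
  moreover have "x * inverse x = 1" using a(2) by (rule right_inverse)
  ultimately show False using a by simp
qed

lemma mc_div: "\<chi> \<in> mult_chars \<Longrightarrow> (y::'a::{finite,field}) \<noteq> 0 \<Longrightarrow> \<chi> (x / y) = \<chi> x * inverse (\<chi> y)"
  by (cases "x = 0") (simp_all add: divide_inverse mc_mult mc_inverse)

lemma mc_sign: "\<chi> \<in> mult_chars \<Longrightarrow> \<chi> (-1::'a::{finite,field}) * \<chi> (-1) = 1"
proof -
  assume a: "\<chi> \<in> mult_chars"
  have "\<chi> ((-1::'a) * (-1)) = \<chi> (-1) * \<chi> (-1)" using a by (intro mc_mult) auto
  then show ?thesis using a by simp
qed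

lemma mc_sign_inv[simp]: "\<chi> \<in> mult_chars \<Longrightarrow> inverse (\<chi> (-1::'a::{finite,field})) = \<chi> (-1)"
  using mc_sign inverse_unique by metis

lemma triv_mc[simp]: "(triv_char :: 'a::{finite,field} \<Rightarrow> complex) \<in> mult_chars"
  unfolding mult_chars_def triv_char_def by (intro CollectI conjI allI impI) simp_all

lemma char_mult_mc[simp]: "\<chi> \<in> mult_chars \<Longrightarrow> \<eta> \<in> mult_chars \<Longrightarrow> char_mult \<chi> \<eta> \<in> mult_chars"
  unfolding mult_chars_def char_mult_def by (intro CollectI conjI allI impI) simp_all

lemma char_inv_mc[simp]: "\<chi> \<in> mult_chars \<Longrightarrow> char_inv \<chi> \<in> mult_chars"
  unfolding mult_chars_def char_inv_def by (intro CollectI conjI allI impI) (simp_all add: mc_mult)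

lemma char_mult_triv[simp]: "\<chi> \<in> mult_chars \<Longrightarrow> char_mult triv_char \<chi> = \<chi>"
  by (rule ext) (simp add: char_mult_def triv_char_def)

lemma psi_cases: "add_char \<psi> \<Longrightarrow> \<psi> 0 = 1 \<or> (\<forall>x. \<psi> x = 0)"
proof -
  assume a: "add_char \<psi>"
  have "\<psi> 0 = \<psi> 0 * \<psi> 0" using a unfolding add_char_def by (metis add_0)
  then have "\<psi> 0 = 0 \<or> \<psi> 0 = 1" by (metis mult_cancel_left1)
  moreover have "\<psi> 0 = 0 \<Longrightarrow> \<psi> x = 0" for x
    using a unfolding add_char_def by (metis add_0_right mult_zero_right)
  ultimately show ?thesis by blast
qed

lemma psi_sum: assumes "add_char (\<psi>::'a::{finite,field} \<Rightarrow> complex)" shows "(\<Sum>x\<in>UNIV. \<psi> x) = 0"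
proof -
  obtain a where a: "\<psi> a \<noteq> 1" using assms unfolding add_char_def by blast
  have "(\<Sum>x\<in>UNIV. \<psi> (a + x)) = (\<Sum>x\<in>UNIV. \<psi> x)"
    by (rule sum.reindex_bij_witness[of _ "\<lambda>x. x - a" "\<lambda>x. a + x"]) auto
  moreover have "(\<Sum>x\<in>UNIV. \<psi> (a + x)) = \<psi> a * (\<Sum>x\<in>UNIV. \<psi> x)"
    using assms unfolding add_char_def by (simp add: sum_distrib_left)
  ultimately show ?thesis using a
    by (metis mult_cancel_right1)
qed

lemma psi_sum_nz: assumes "add_char (\<psi>::'a::{finite,field} \<Rightarrow> complex)" "\<psi> 0 = 1"
  shows "(\<Sum>x\<in>{x. x \<noteq> 0}. \<psi> x) = -1"
proof -
  have "(\<Sum>x\<in>UNIV. \<psi> x) = \<psi> 0 + (\<Sum>x\<in>UNIV - {0}. \<psi> x)"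
    by (rule sum.remove) auto
  moreover have "UNIV - {0::'a} = {x. x \<noteq> 0}" by auto
  ultimately have "0 = 1 + (\<Sum>x\<in>{x. x \<noteq> 0}. \<psi> x)" using psi_sum[OF assms(1)] assms(2) by simp
  then show ?thesis by (metis add.commute add_eq_0_iff)
qed

lemma psi_sum_scaled: assumes "add_char (\<psi>::'a::{finite,field} \<Rightarrow> complex)" "\<psi> 0 = 1" "c \<noteq> 0"
  shows "(\<Sum>y\<in>{y. y \<noteq> 0}. \<psi> (y * c)) = -1"
proof -
  have "(\<Sum>y\<in>{y. y \<noteq> 0}. \<psi> (y * c)) = (\<Sum>x\<in>{x. x \<noteq> 0}. \<psi> x)"
    by (rule sum.reindex_bij_witness[of _ "\<lambda>x. x / c" "\<lambda>y. y * c"]) (use assms(3) in auto)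
  then show ?thesis using psi_sum_nz[OF assms(1,2)] by simp
qed

lemma chi_sum: assumes "\<chi> \<in> mult_chars" "\<chi> \<noteq> (triv_char :: 'a::{finite,field} \<Rightarrow> complex)"
  shows "(\<Sum>x\<in>{x. x \<noteq> 0}. \<chi> x) = 0"
proof -
  obtain a where a: "a \<noteq> 0" "\<chi> a \<noteq> 1"
  proof -
    have "\<exists>a. a \<noteq> 0 \<and> \<chi> a \<noteq> 1"
    proof (rule ccontr)
      assume "\<not> ?thesis"
      then have "\<chi> = triv_char" using assms(1) mc_0[OF assms(1)]
        by (intro ext) (auto simp: triv_char_def)
      then show False using assms(2) by simp
    qed
    then show ?thesis using that by blast
  qed
  have "(\<Sum>x\<in>{x. x \<noteq> 0}. \<chi> (a * x)) = (\<Sum>x\<in>{x. x \<noteq> 0}. \<chi> x)"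
    by (rule sum.reindex_bij_witness[of _ "\<lambda>x. x / a" "\<lambda>x. a * x"]) (use a in auto)
  moreover have "(\<Sum>x\<in>{x. x \<noteq> 0}. \<chi> (a * x)) = \<chi> a * (\<Sum>x\<in>{x. x \<noteq> 0}. \<chi> x)"
    using assms(1) a by (simp add: sum_distrib_left mc_mult)
  ultimately show ?thesis using a by (metis mult_cancel_right1)
qed

lemma gauss_triv: assumes "add_char (\<psi>::'a::{finite,field} \<Rightarrow> complex)" "\<psi> 0 = 1"
  shows "gauss \<psi> triv_char = 1"
proof -
  have "(\<Sum>x\<in>{x::'a. x \<noteq> 0}. \<psi> x * triv_char x) = (\<Sum>x\<in>{x. x \<noteq> 0}. \<psi> x)"
    by (rule sum.cong) (auto simp: triv_char_def)
  then show ?thesis using psi_sum_nz[OF assms] by (simp add: gauss_def)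
qed

lemma card_nz: "(of_nat (card {x::'a::{finite,field}. x \<noteq> 0}) :: complex) = of_nat (card (UNIV::'a set)) - 1"
proof -
  have "card {x::'a. x \<noteq> 0} = card (UNIV - {0::'a})" by (rule arg_cong[where f=card]) auto
  also have "\<dots> = card (UNIV::'a set) - 1" by (simp add: card_Diff_subset)
  finally have "card {x::'a. x \<noteq> 0} = card (UNIV::'a set) - 1" .
  moreover have "card (UNIV::'a set) \<ge> 1"
    by (simp add: Suc_le_eq finite_UNIV_card_ge_0)
  ultimately show ?thesis by (simp add: of_nat_diff)
qed

lemma key_nontriv:
  fixes \<psi> \<chi> \<chi>' :: "'a::{finite,field} \<Rightarrow> complex"
  assumes psi: "add_char \<psi>" "\<psi> 0 = 1" and chi: "\<chi> \<in> mult_chars" "\<chi>' \<in> mult_chars" "\<chi> \<noteq> triv_char"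
    and inv: "\<And>x. x \<noteq> 0 \<Longrightarrow> \<chi> x * \<chi>' x = 1"
  shows "gauss \<psi> \<chi> * gauss \<psi> \<chi>' = \<chi> (-1) * of_nat (card (UNIV::'a set))"
proof -
  define S where "S = {x::'a. x \<noteq> 0}"
  have padd: "\<psi> (a + b) = \<psi> a * \<psi> b" for a b using psi(1) unfolding add_char_def by blast
  have "gauss \<psi> \<chi> * gauss \<psi> \<chi>' = (\<Sum>x\<in>S. \<psi> x * \<chi> x) * (\<Sum>y\<in>S. \<psi> y * \<chi>' y)"
    by (simp add: gauss_def S_def)
  also have "\<dots> = (\<Sum>y\<in>S. (\<Sum>x\<in>S. \<psi> x * \<chi> x) * (\<psi> y * \<chi>' y))"
    by (simp add: sum_distrib_left)
  also have "\<dots> = (\<Sum>y\<in>S. \<Sum>t\<in>S. \<psi> (y * (t + 1)) * \<chi> t)"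
  proof (rule sum.cong[OF refl])
    fix y assume y: "y \<in> S"
    then have y0: "y \<noteq> 0" by (simp add: S_def)
    have "(\<Sum>x\<in>S. \<psi> x * \<chi> x) * (\<psi> y * \<chi>' y) = (\<Sum>x\<in>S. \<psi> x * \<chi> x * (\<psi> y * \<chi>' y))"
      by (simp add: sum_distrib_right)
    also have "\<dots> = (\<Sum>t\<in>S. \<psi> (y * (t + 1)) * \<chi> t)"
    proof (rule sum.reindex_bij_witness[of _ "\<lambda>t. t * y" "\<lambda>x. x / y"])
      fix x assume x: "x \<in> S"
      have e1: "y * (x / y + 1) = x + y" using y0 by (simp add: field_simps)
      have e2: "\<chi>' y = inverse (\<chi> y)" using inv[OF y0] by (metis inverse_unique)
      show "\<psi> (y * (x / y + 1)) * \<chi> (x / y) = \<psi> x * \<chi> x * (\<psi> y * \<chi>' y)"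
        unfolding e1 e2 padd mc_div[OF chi(1) y0] by (simp add: algebra_simps)
    qed (use y0 in \<open>auto simp: S_def\<close>)
    finally show "(\<Sum>x\<in>S. \<psi> x * \<chi> x) * (\<psi> y * \<chi>' y) = (\<Sum>t\<in>S. \<psi> (y * (t + 1)) * \<chi> t)" .
  qed
  also have "\<dots> = (\<Sum>t\<in>S. \<chi> t * (\<Sum>y\<in>S. \<psi> (y * (t + 1))))"
    by (subst sum.swap) (simp add: sum_distrib_left mult.commute)
  also have "\<dots> = (\<Sum>t\<in>S. of_nat (card (UNIV::'a set)) * (if t = -1 then \<chi> t else 0) - \<chi> t)"
  proof (rule sum.cong[OF refl])
    fix t assume t: "t \<in> S"
    show "\<chi> t * (\<Sum>y\<in>S. \<psi> (y * (t + 1))) = of_nat (card (UNIV::'a set)) * (if t = -1 then \<chi> t else 0) - \<chi> t"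
    proof (cases "t = -1")
      case True
      then have h: "(\<Sum>y\<in>S. \<psi> (y * (t + 1))) = of_nat (card S)" using psi(2) by simp
      have c: "(of_nat (card S) :: complex) = of_nat (card (UNIV::'a set)) - 1"
        unfolding S_def by (rule card_nz)
      have "\<chi> t * (\<Sum>y\<in>S. \<psi> (y * (t + 1))) = \<chi> t * (of_nat (card (UNIV::'a set)) - 1)"
        by (simp only: h c)
      also have "\<dots> = of_nat (card (UNIV::'a set)) * \<chi> t - \<chi> t" by (simp add: algebra_simps)
      finally show ?thesis using True by (simp only: simp_thms if_True)
    next
      case False
      then have "t + 1 \<noteq> 0" by (simp add: eq_neg_iff_add_eq_0)
      then have "(\<Sum>y\<in>S. \<psi> (y * (t + 1))) = -1" unfolding S_def by (rule psi_sum_scaled[OF psi])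
      then show ?thesis using False by simp
    qed
  qed
  also have "\<dots> = of_nat (card (UNIV::'a set)) * (\<Sum>t\<in>S. (if t = -1 then \<chi> t else 0)) - (\<Sum>t\<in>S. \<chi> t)"
    by (simp only: sum_subtractf sum_distrib_left)
  also have "\<dots> = of_nat (card (UNIV::'a set)) * \<chi> (-1)"
  proof -
    have m: "(-1::'a) \<in> S" by (simp add: S_def)
    have "(\<Sum>t\<in>S. (if t = -1 then \<chi> t else 0)) = \<chi> (-1)"
      using m by (simp add: sum.delta)
    then show ?thesis using chi_sum[OF chi(1) chi(3)] by (simp add: S_def)
  qed
  finally show ?thesis by (simp add: mult.commute)
qed

lemma key:
  fixes \<psi> \<chi> \<chi>' :: "'a::{finite,field} \<Rightarrow> complex"
  assumes psi: "add_char \<psi>" "\<psi> 0 = 1" and chi: "\<chi> \<in> mult_chars" "\<chi>' \<in> mult_chars"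
    and inv: "\<And>x. x \<noteq> 0 \<Longrightarrow> \<chi> x * \<chi>' x = 1"
  shows "gauss \<psi> \<chi> * gauss_circ \<psi> \<chi>' = \<chi> (-1) * of_nat (card (UNIV::'a set))"
proof (cases "\<chi> = triv_char")
  case True
  have "\<chi>' = triv_char"
  proof (rule ext)
    fix x show "\<chi>' x = triv_char x"
      using inv[of x] True mc_0[OF chi(2)] by (cases "x = 0") (auto simp: triv_char_def)
  qed
  then show ?thesis using True gauss_triv[OF psi] by (simp add: gauss_circ_def triv_char_def)
next
  case False
  have "\<chi>' \<noteq> triv_char"
  proof
    assume t: "\<chi>' = triv_char"
    have "\<chi> = triv_char"
    proof (rule ext)
      fix x show "\<chi> x = triv_char x"
        using inv[of x] t mc_0[OF chi(1)] by (cases "x = 0") (auto simp: triv_char_def)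
    qed
    then show False using False by simp
  qed
  then have "gauss_circ \<psi> \<chi>' = gauss \<psi> \<chi>'" by (simp add: gauss_circ_def)
  then show ?thesis using key_nontriv[OF psi chi False inv] by simp
qed

lemma q_nz: "(of_nat (card (UNIV::'a::finite set)) :: complex) \<noteq> 0"
  by simp

lemma sign_nz: "\<chi> \<in> mult_chars \<Longrightarrow> \<chi> (-1::'a::{finite,field}) \<noteq> 0"
  using mc_sign by fastforce

lemma G_nz:
  fixes \<psi> \<chi> :: "'a::{finite,field} \<Rightarrow> complex"
  assumes psi: "add_char \<psi>" "\<psi> 0 = 1" and chi: "\<chi> \<in> mult_chars"
  shows "gauss \<psi> \<chi> \<noteq> 0"
proof
  assume "gauss \<psi> \<chi> = 0"
  moreover have "gauss \<psi> \<chi> * gauss_circ \<psi> (char_inv \<chi>) = \<chi> (-1) * of_nat (card (UNIV::'a set))"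
    by (rule key[OF psi chi char_inv_mc[OF chi]]) (simp add: char_inv_def mc_nz[OF chi])
  ultimately show False using sign_nz[OF chi] q_nz[where 'a='a] by simp
qed

lemma H_nz:
  fixes \<psi> \<chi> :: "'a::{finite,field} \<Rightarrow> complex"
  assumes psi: "add_char \<psi>" "\<psi> 0 = 1" and chi: "\<chi> \<in> mult_chars"
  shows "gauss_circ \<psi> \<chi> \<noteq> 0"
proof
  assume "gauss_circ \<psi> \<chi> = 0"
  moreover have "gauss \<psi> (char_inv \<chi>) * gauss_circ \<psi> \<chi> = char_inv \<chi> (-1) * of_nat (card (UNIV::'a set))"
    by (rule key[OF psi char_inv_mc[OF chi] chi]) (simp add: char_inv_def mc_nz[OF chi])
  ultimately show False using sign_nz[OF char_inv_mc[OF chi]] q_nz[where 'a='a] by simp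
qed

lemma alg:
  fixes Ga Gb Gag g1 g2 g3 g4 g5 g6 h1 h2 h3 h4 h5 h6 Hc1 Hc1n Ht1 Ht ia w1 w2 v1 v2 :: complex
  assumes "Ga \<noteq> 0" "Gb \<noteq> 0" "Gag \<noteq> 0" "g5 \<noteq> 0" "Hc1 \<noteq> 0" "Hc1n \<noteq> 0" "Ht1 \<noteq> 0" "Ht \<noteq> 0"
    "h1 \<noteq> 0" "h2 \<noteq> 0" "h3 \<noteq> 0" "h4 \<noteq> 0" "h5 \<noteq> 0" "h6 \<noteq> 0"
    and prod: "g1*h1*(g2*h2)*(g5*h5) = g6*h6*(g3*h3)*(g4*h4)"
    and v: "ia * w1 * w2 = v1 * v2"
  shows "g6 * Gag / (Gb * g5) * ia * (g3 / Ga * (g4 / Gag) / (Hc1n / Hc1 * (h2 / h6) * (Ht1 / Ht) * (h1 / Ht)) * w1 * w2)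
    = g1 / Ga * (g2 / Gb) / (Hc1n / Hc1 * (h4 / h5) * (Ht1 / Ht) * (h3 / Ht)) * v1 * v2"
proof -
  have "g6 * Gag / (Gb * g5) * ia * (g3 / Ga * (g4 / Gag) / (Hc1n / Hc1 * (h2 / h6) * (Ht1 / Ht) * (h1 / Ht)) * w1 * w2)
     = (g6*h6*(g3*h3)*(g4*h4)) * (Hc1 * Ht * Ht) / (Gb * Ga * Hc1n * Ht1 * g5 * h1 * h2 * h3 * h4) * (ia * w1 * w2)"
    using assms by (simp add: field_simps)
  also have "\<dots> = (g1*h1*(g2*h2)*(g5*h5)) * (Hc1 * Ht * Ht) / (Gb * Ga * Hc1n * Ht1 * g5 * h1 * h2 * h3 * h4) * (v1 * v2)"
    by (simp only: prod v)
  also have "\<dots> = g1 / Ga * (g2 / Gb) / (Hc1n / Hc1 * (h4 / h5) * (Ht1 / Ht) * (h3 / Ht)) * v1 * v2"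
    using assms by (simp add: field_simps)
  finally show ?thesis .
qed

lemma prod_lemma:
  fixes \<psi> \<alpha> \<beta> \<gamma>2 \<nu>1 \<nu>2 :: "'a::{finite,field} \<Rightarrow> complex"
  assumes psi: "add_char \<psi>" "\<psi> 0 = 1"
    and mc: "\<alpha> \<in> mult_chars" "\<beta> \<in> mult_chars" "\<gamma>2 \<in> mult_chars" "\<nu>1 \<in> mult_chars" "\<nu>2 \<in> mult_chars"
    and mu: "\<mu>2 = char_inv (char_mult (char_mult \<alpha> \<nu>1) \<nu>2)"
  shows "gauss \<psi> (char_mult \<alpha> (char_mult \<nu>1 \<nu>2)) * gauss_circ \<psi> (char_mult triv_char \<mu>2)
     * (gauss \<psi> (char_mult \<beta> (char_mult \<nu>1 \<nu>2)) * gauss_circ \<psi> (char_mult (char_mult \<alpha> (char_inv \<beta>)) \<mu>2))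
     * (gauss \<psi> (char_inv \<gamma>2) * gauss_circ \<psi> \<gamma>2)
   = gauss \<psi> (char_mult (char_inv \<alpha>) \<beta>) * gauss_circ \<psi> (char_mult \<alpha> (char_inv \<beta>))
     * (gauss \<psi> (char_mult \<alpha> (char_mult \<nu>1 \<mu>2)) * gauss_circ \<psi> (char_mult triv_char \<nu>2))
     * (gauss \<psi> (char_mult (char_mult \<alpha> (char_inv \<gamma>2)) (char_mult \<nu>1 \<mu>2)) * gauss_circ \<psi> (char_mult \<gamma>2 \<nu>2))"
proof -
  note nz = mc_nz[OF mc(1)] mc_nz[OF mc(2)] mc_nz[OF mc(3)] mc_nz[OF mc(4)] mc_nz[OF mc(5)]
  have mmu: "\<mu>2 \<in> mult_chars" using mc mu by simp
  let ?q = "of_nat (card (UNIV::'a set)) :: complex"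
  have e1: "gauss \<psi> (char_mult \<alpha> (char_mult \<nu>1 \<nu>2)) * gauss_circ \<psi> (char_mult triv_char \<mu>2)
      = (char_mult \<alpha> (char_mult \<nu>1 \<nu>2)) (-1) * ?q"
    by (rule key[OF psi]) (simp_all add: mc mmu, use mc mmu nz in \<open>simp add: mu char_mult_def char_inv_def triv_char_def field_simps\<close>)
  have e2: "gauss \<psi> (char_mult \<beta> (char_mult \<nu>1 \<nu>2)) * gauss_circ \<psi> (char_mult (char_mult \<alpha> (char_inv \<beta>)) \<mu>2)
      = (char_mult \<beta> (char_mult \<nu>1 \<nu>2)) (-1) * ?q"
    by (rule key[OF psi]) (simp_all add: mc mmu, use mc mmu nz in \<open>simp add: mu char_mult_def char_inv_def field_simps\<close>)
  have e3: "gauss \<psi> (char_inv \<gamma>2) * gauss_circ \<psi> \<gamma>2 = (char_inv \<gamma>2) (-1) * ?q"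
    by (rule key[OF psi]) (simp_all add: mc mmu, use mc mmu nz in \<open>simp add: char_mult_def char_inv_def field_simps\<close>)
  have e4: "gauss \<psi> (char_mult (char_inv \<alpha>) \<beta>) * gauss_circ \<psi> (char_mult \<alpha> (char_inv \<beta>)) = (char_mult (char_inv \<alpha>) \<beta>) (-1) * ?q"
    by (rule key[OF psi]) (simp_all add: mc mmu, use mc mmu nz in \<open>simp add: char_mult_def char_inv_def field_simps\<close>)
  have e5: "gauss \<psi> (char_mult \<alpha> (char_mult \<nu>1 \<mu>2)) * gauss_circ \<psi> (char_mult triv_char \<nu>2) = (char_mult \<alpha> (char_mult \<nu>1 \<mu>2)) (-1) * ?q"
    by (rule key[OF psi]) (simp_all add: mc mmu, use mc mmu nz in \<open>simp add: mu char_mult_def char_inv_def triv_char_def field_simps\<close>)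
  have e6: "gauss \<psi> (char_mult (char_mult \<alpha> (char_inv \<gamma>2)) (char_mult \<nu>1 \<mu>2)) * gauss_circ \<psi> (char_mult \<gamma>2 \<nu>2) = (char_mult (char_mult \<alpha> (char_inv \<gamma>2)) (char_mult \<nu>1 \<mu>2)) (-1) * ?q"
    by (rule key[OF psi]) (simp_all add: mc mmu, use mc mmu nz in \<open>simp add: mu char_mult_def char_inv_def field_simps\<close>)
  have s: "\<alpha> (-1) * \<alpha> (-1) = 1" "\<nu>1 (-1) * \<nu>1 (-1) = 1" "\<nu>2 (-1) * \<nu>2 (-1) = 1"
    using mc_sign mc by blast+
  have s2: "\<beta> (-1) * \<beta> (-1) = 1" "\<gamma>2 (-1) * \<gamma>2 (-1) = 1"
    using mc_sign mc by blast+
  show ?thesis unfolding e1 e2 e3 e4 e5 e6 unfolding mu char_mult_def char_inv_def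
    using s s2 mc by (simp add: inverse_mult_distrib) algebra
qed

definition F4t where
  "F4t \<psi> \<alpha> \<beta> \<gamma>1 \<gamma>2 x y \<nu>1 \<nu>2 =
        poch \<psi> \<alpha> (char_mult \<nu>1 \<nu>2) * poch \<psi> \<beta> (char_mult \<nu>1 \<nu>2) /
        (poch_circ \<psi> \<gamma>1 \<nu>1 * poch_circ \<psi> \<gamma>2 \<nu>2 *
         poch_circ \<psi> triv_char \<nu>1 * poch_circ \<psi> triv_char \<nu>2) * \<nu>1 x * \<nu>2 y"

lemma F4_alt:
  fixes \<psi> :: "'a::{finite,field} \<Rightarrow> complex" and x y :: 'a
  shows "F4 \<psi> \<alpha> \<beta> \<gamma>1 \<gamma>2 x y = 1 / (1 - of_nat (card (UNIV::'a::{finite,field} set)))^2 *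
   (\<Sum>\<nu>1\<in>mult_chars. \<Sum>\<nu>2\<in>mult_chars. F4t \<psi> \<alpha> \<beta> \<gamma>1 \<gamma>2 x y \<nu>1 \<nu>2)"
  unfolding F4_def F4t_def by (rule refl)

lemma term_eq:
  fixes \<psi> \<alpha> \<beta> \<gamma>1 \<gamma>2 \<nu>1 \<nu>2 :: "'a::{finite,field} \<Rightarrow> complex" and x y :: 'a
  assumes psi: "add_char \<psi>" "\<psi> 0 = 1"
    and mc: "\<alpha> \<in> mult_chars" "\<beta> \<in> mult_chars" "\<gamma>1 \<in> mult_chars" "\<gamma>2 \<in> mult_chars" "\<nu>1 \<in> mult_chars" "\<nu>2 \<in> mult_chars"
    and y: "y \<noteq> 0"
  shows "gauss \<psi> (char_mult (char_inv \<alpha>) \<beta>) * gauss \<psi> (char_mult \<alpha> (char_inv \<gamma>2))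
      / (gauss \<psi> \<beta> * gauss \<psi> (char_inv \<gamma>2)) * char_inv \<alpha> y *
      F4t \<psi> \<alpha> (char_mult \<alpha> (char_inv \<gamma>2)) \<gamma>1 (char_mult \<alpha> (char_inv \<beta>)) (x / y) (1 / y)
        \<nu>1 (char_inv (char_mult (char_mult \<alpha> \<nu>1) \<nu>2))
    = F4t \<psi> \<alpha> \<beta> \<gamma>1 \<gamma>2 x y \<nu>1 \<nu>2"
proof -
  define \<mu>2 where "\<mu>2 = char_inv (char_mult (char_mult \<alpha> \<nu>1) \<nu>2)"
  have mmu: "\<mu>2 \<in> mult_chars" using mc by (simp add: \<mu>2_def)
  note G = G_nz[OF psi] and H = H_nz[OF psi]
  have v: "char_inv \<alpha> y * \<nu>1 (x / y) * \<mu>2 (1 / y) = \<nu>1 x * \<nu>2 y"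
  proof -
    have a: "\<alpha> y \<noteq> 0" "\<nu>1 y \<noteq> 0" "\<nu>2 y \<noteq> 0" using mc_nz mc y by blast+
    have "\<mu>2 (1 / y) = \<alpha> y * \<nu>1 y * \<nu>2 y"
      unfolding \<mu>2_def char_inv_def char_mult_def
      using mc_div[OF mc(1) y, of 1] mc_div[OF mc(5) y, of 1] mc_div[OF mc(6) y, of 1] mc
      by (simp add: inverse_mult_distrib)
    then show ?thesis using a mc_div[OF mc(5) y, of x] by (simp add: char_inv_def field_simps)
  qed
  show ?thesis
    unfolding \<mu>2_def[symmetric] F4t_def poch_def poch_circ_def
    apply (rule alg)
    prefer 15 apply (rule prod_lemma[OF psi mc(1,2,4,5,6) \<mu>2_def])
    prefer 15 apply (rule v)
    using mc mmu by (simp_all add: G H)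
qed

theorem proposition3p17:
  fixes \<psi> \<alpha> \<beta> \<gamma>1 \<gamma>2 :: "'a::{finite,field} \<Rightarrow> complex" and x y :: 'a
  assumes "add_char \<psi>"
    and "\<alpha> \<in> mult_chars" and "\<beta> \<in> mult_chars" and "\<gamma>1 \<in> mult_chars" and "\<gamma>2 \<in> mult_chars"
    and "\<alpha> \<noteq> triv_char"
    and "char_mult (char_mult (char_inv \<beta>) \<gamma>1) \<gamma>2 \<noteq> triv_char"
    and "y \<noteq> 0"
  shows "F4 \<psi> \<alpha> \<beta> \<gamma>1 \<gamma>2 x y =
    gauss \<psi> (char_mult (char_inv \<alpha>) \<beta>) * gauss \<psi> (char_mult \<alpha> (char_inv \<gamma>2))
      / (gauss \<psi> \<beta> * gauss \<psi> (char_inv \<gamma>2))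
    * char_inv \<alpha> y
    * F4 \<psi> \<alpha> (char_mult \<alpha> (char_inv \<gamma>2)) \<gamma>1 (char_mult \<alpha> (char_inv \<beta>)) (x / y) (1 / y)"
proof (cases "\<psi> 0 = 1")
  case False
  then have z: "\<And>x. \<psi> x = 0" using psi_cases[OF assms(1)] by blast
  have "\<And>\<eta>. gauss \<psi> \<eta> = 0" by (simp add: gauss_def z)
  then show ?thesis by (simp add: F4_alt F4t_def poch_def)
next
  case True
  note psi = assms(1) True
  let ?C = "gauss \<psi> (char_mult (char_inv \<alpha>) \<beta>) * gauss \<psi> (char_mult \<alpha> (char_inv \<gamma>2))
      / (gauss \<psi> \<beta> * gauss \<psi> (char_inv \<gamma>2)) * char_inv \<alpha> y"
  let ?K = "1 / (1 - of_nat (card (UNIV::'a set)))^2 :: complex"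
  let ?T = "F4t \<psi> \<alpha> (char_mult \<alpha> (char_inv \<gamma>2)) \<gamma>1 (char_mult \<alpha> (char_inv \<beta>)) (x / y) (1 / y)"
  have "?C * F4 \<psi> \<alpha> (char_mult \<alpha> (char_inv \<gamma>2)) \<gamma>1 (char_mult \<alpha> (char_inv \<beta>)) (x / y) (1 / y)
      = ?K * (\<Sum>\<nu>1\<in>mult_chars. \<Sum>\<mu>2\<in>mult_chars. ?C * ?T \<nu>1 \<mu>2)"
    unfolding F4_alt by (simp add: sum_distrib_left mult_ac)
  also have "\<dots> = ?K * (\<Sum>\<nu>1\<in>mult_chars. \<Sum>\<nu>2\<in>mult_chars. F4t \<psi> \<alpha> \<beta> \<gamma>1 \<gamma>2 x y \<nu>1 \<nu>2)"
  proof (rule arg_cong[where f="\<lambda>s. ?K * s"], rule sum.cong[OF refl])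
    fix \<nu>1 :: "'a \<Rightarrow> complex" assume n1: "\<nu>1 \<in> mult_chars"
    let ?f = "\<lambda>\<nu>::'a \<Rightarrow> complex. char_inv (char_mult (char_mult \<alpha> \<nu>1) \<nu>)"
    have fm: "?f \<nu> \<in> mult_chars" if n: "\<nu> \<in> mult_chars" for \<nu> using n n1 assms(2) by simp
    have ff: "?f (?f \<nu>) = \<nu>" if n: "\<nu> \<in> mult_chars" for \<nu>
      proof (rule ext)
        fix z show "?f (?f \<nu>) z = \<nu> z"
        proof (cases "z = 0")
          case True then show ?thesis using n by (simp add: char_inv_def char_mult_def)
        next
          case False
          then have "\<alpha> z \<noteq> 0" "\<nu>1 z \<noteq> 0" using mc_nz assms(2) n1 by blast+
          then show ?thesis by (simp add: char_inv_def char_mult_def inverse_mult_distrib field_simps)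
        qed
      qed
    show "(\<Sum>\<mu>2\<in>mult_chars. ?C * ?T \<nu>1 \<mu>2) = (\<Sum>\<nu>2\<in>mult_chars. F4t \<psi> \<alpha> \<beta> \<gamma>1 \<gamma>2 x y \<nu>1 \<nu>2)"
      apply (rule sym, rule sum.reindex_bij_witness[of _ ?f ?f])
          apply (erule ff)
         apply (erule fm)
        apply (erule ff)
       apply (erule fm)
      apply (erule term_eq[OF psi assms(2-5) n1 _ assms(8)])
      done
  qed
  finally show ?thesis by (simp add: F4_alt)
qed

end
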